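(* Let $C$ be a copula, and write $C_{2|1}(v|u)=\partial C(u,v)/\partial u$ and $C_{1|2}(u|v)=\partial C(u,v)/\partial v$. Provided the partial derivatives and limits appearing below exist, the following hold. For $p,q\in(0,1)$: $$\lambda^C(q|p)=\tfrac12\lim_{t\to0^+}\big[C_{2|1}(q+t|p+t)-C_{2|1}(q-t|p+t)+C_{2|1}(q+t|p-t)-C_{2|1}(q-t|p-t)+C_{1|2}(p+t|q+t)-C_{1|2}(p-t|q+t)+C_{1|2}(p+t|q-t)-C_{1|2}(p-t|q-t)\big].$$ For $p\in(0,1)$, $q=0$: $\lambda^C(0|p)=\tfrac12\lim_{t\to0^+}[C_{2|1}(t|p+t)+C_{2|1}(t|p-t)+C_{1|2}(p+t|t)-C_{1|2}(p-t|t)]$. For $p\in(0,1)$, $q=1$: $\lambda^C(1|p)=1-\tfrac12\lim_{t\to0^+}[C_{2|1}(1-t|p+t)+C_{2|1}(1-t|p-t)-C_{1|2}(p+t|1-t)+C_{1|2}(p-t|1-t)]$. For $p=0$, $q\in(0,1)$: $\lambda^C(q|0)=\lim_{t\to0^+}[C_{2|1}(q+t|t)-C_{2|1}(q-t|t)+C_{1|2}(t|q+t)+C_{1|2}(t|q-t)]$. For $p=1$, $q\in(0,1)$: $\lambda^C(q|1)=2-\lim_{t\to0^+}[C_{1|2}(1-t|q+t)+C_{1|2}(1-t|q-t)-C_{2|1}(q+t|1-t)+C_{2|1}(q-t|1-t)]$. For $p=0$, $q=1$: $\lambda^C(1|0)=1-\lim_{t\to0^+}[C_{2|1}(1-t|t)-C_{1|2}(t|1-t)]$.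 For $q=0$, $p=1$: $\lambda^C(0|1)=1-\lim_{t\to0^+}[C_{1|2}(1-t|t)-C_{2|1}(t|1-t)]$.
   Context: A copula is a bivariate distribution function on $[0,1]^2$ with uniform$(0,1)$ margins. For a copula $C$ and $p,q\in[0,1]$, the $(p,q)$-quantile dependence coefficient is $\lambda^C(q|p)=\lim_{t\to0^+}\frac{V_C([(p-t)^+,(p+t)^-]\times[(q-t)^+,(q+t)^-])}{(p+t)^- - (p-t)^+}$ when the limit exists, where $a^+=\max(a,0)$, $a^-=1-(1-a)^+$, and $V_C([u_1,u_2]\times[v_1,v_2])=C(u_2,v_2)-C(u_2,v_1)-C(u_1,v_2)+C(u_1,v_1)$. *)

theory Defs
  imports "HOL-Analysis.Analysis"
begin

text \<open>A copula, represented as a real function of two real arguments; only its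
values on the unit square matter.  Grounded, uniform margins, 2-increasing.\<close>
definition copula :: "(real \<Rightarrow> real \<Rightarrow> real) \<Rightarrow> bool" where
  "copula C \<longleftrightarrow>
     (\<forall>u\<in>{0..1}. C u 0 = 0 \<and> C 0 u = 0 \<and> C u 1 = u \<and> C 1 u = u) \<and>
     (\<forall>u1\<in>{0..1}. \<forall>u2\<in>{0..1}. \<forall>v1\<in>{0..1}. \<forall>v2\<in>{0..1}.
        u1 \<le> u2 \<longrightarrow> v1 \<le> v2 \<longrightarrow> C u2 v2 - C u2 v1 - C u1 v2 + C u1 v1 \<ge> 0)"

definition Cvol :: "(real \<Rightarrow> real \<Rightarrow> real) \<Rightarrow> real \<Rightarrow> real \<Rightarrow> real \<Rightarrow> real \<Rightarrow> real" where
  "Cvol C u1 u2 v1 v2 = C u2 v2 - C u2 v1 - C u1 v2 + C u1 v1"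

definition pospart :: "real \<Rightarrow> real" where "pospart a = max a 0"
definition negpart :: "real \<Rightarrow> real" where "negpart a = 1 - pospart (1 - a)"

definition qd_ratio :: "(real \<Rightarrow> real \<Rightarrow> real) \<Rightarrow> real \<Rightarrow> real \<Rightarrow> real \<Rightarrow> real" where
  "qd_ratio C q p t =
     Cvol C (pospart (p - t)) (negpart (p + t)) (pospart (q - t)) (negpart (q + t))
     / (negpart (p + t) - pospart (p - t))"

text \<open>lambda^C(q|p) exists and equals L.\<close>
definition qdc_is :: "(real \<Rightarrow> real \<Rightarrow> real) \<Rightarrow> real \<Rightarrow> real \<Rightarrow> real \<Rightarrow> bool" where
  "qdc_is C q p L \<longleftrightarrow> (qd_ratio C q p \<longlongrightarrow> L) (at_right 0)"

text \<open>C_{2|1}(v|u) = dC(u,v)/du and C_{1|2}(u|v) = dC(u,v)/dv.\<close>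
definition cd21 :: "(real \<Rightarrow> real \<Rightarrow> real) \<Rightarrow> real \<Rightarrow> real \<Rightarrow> real" where
  "cd21 C v u = deriv (\<lambda>x. C x v) u"
definition cd12 :: "(real \<Rightarrow> real \<Rightarrow> real) \<Rightarrow> real \<Rightarrow> real \<Rightarrow> real" where
  "cd12 C u v = deriv (\<lambda>y. C u y) v"

definition partials_exist :: "(real \<Rightarrow> real \<Rightarrow> real) \<Rightarrow> real \<Rightarrow> real \<Rightarrow> bool" where
  "partials_exist C u v \<longleftrightarrow>
     (\<lambda>x. C x v) differentiable (at u) \<and> (\<lambda>y. C u y) differentiable (at v)"

end

theory Submission
  imports Defs
begin
lemma ev_pick:
  assumes "\<forall>\<^sub>F h in at_right (0::real). P h" and c: "0 < c"
  obtains h where "0 < h" "h < c" "P h"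
proof -
  from assms obtain b where b: "b > 0" "\<forall>y>0. y < b \<longrightarrow> P y"
    unfolding eventually_at_right_field by auto
  have "P (min b c / 2)" using b c by auto
  moreover have "0 < min b c / 2" "min b c / 2 < c" using b c by auto
  ultimately show ?thesis using that by blast
qed

lemma incr_A0:
  fixes f :: "real \<Rightarrow> real"
  assumes ab: "a \<le> b" and cont: "continuous_on {a..b} f"
    and loc: "\<forall>x\<in>{a..<b}. \<forall>\<^sub>F h in at_right 0. f x \<le> f (x+h)"
  shows "f a \<le> f b"
proof -
  define S where "S = {a..b} \<inter> f -` {f a..}"
  have cl: "closed S" unfolding S_def
    by (rule continuous_closed_preimage[OF cont]) auto
  have aS: "a \<in> S" using ab by (auto simp: S_def)
  have bdd: "bdd_above S" unfolding S_def by (auto intro: bdd_aboveI[where M=b])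
  define m where "m = Sup S"
  have mS: "m \<in> S" unfolding m_def using closed_contains_Sup[OF _ bdd cl] aS by blast
  have mb: "m \<le> b" using mS by (auto simp: S_def)
  have "m = b"
  proof (rule ccontr)
    assume "m \<noteq> b"
    then have mlt: "m < b" using mb by simp
    have ma: "a \<le> m" using mS by (auto simp: S_def)
    have ev: "\<forall>\<^sub>F h in at_right 0. f m \<le> f (m+h)" using loc ma mlt by auto
    obtain h where h: "0 < h" "h < b - m" "f m \<le> f (m+h)"
      using ev_pick[OF ev, of "b - m"] mlt by auto
    have "m + h \<in> S" using h mS ma by (auto simp: S_def)
    then have "m + h \<le> Sup S" by (rule cSup_upper[OF _ bdd])
    then have "m + h \<le> m" unfolding m_def .
    then show False using h by simp
  qed
  then show ?thesis using mS by (auto simp: S_def)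
qed

lemma incr_A:
  fixes f :: "real \<Rightarrow> real"
  assumes ab: "a < b" and cont: "continuous_on {a..b} f"
    and loc: "\<forall>x\<in>{a<..<b}. \<forall>\<^sub>F h in at_right 0. f x \<le> f (x+h)"
  shows "f a \<le> f b"
proof -
  have le: "f s \<le> f b" if "a < s" "s < b" for s
    using incr_A0[of s b f] that continuous_on_subset[OF cont, of "{s..b}"] loc by auto
  have lim: "(f \<longlongrightarrow> f a) (at_right a)"
  proof -
    have "(f \<longlongrightarrow> f a) (at a within {a..b})"
      using cont ab unfolding continuous_on_def by auto
    then show ?thesis using ab
      by (metis at_within_Icc_at_right)
  qed
  have ev: "\<forall>\<^sub>F s in at_right a. f s \<le> f b"
    using eventually_at_right_real[OF ab] by eventually_elim (use le in auto)
  show ?thesis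
    by (rule tendsto_upperbound[OF lim ev]) simp
qed

lemma incr_B:
  fixes f :: "real \<Rightarrow> real"
  assumes ab: "a < b" and cont: "continuous_on {a..b} f"
    and loc: "\<forall>x\<in>{a<..<b}. \<forall>\<^sub>F h in at_right 0. f (x-h) \<le> f x"
  shows "f a \<le> f b"
proof -
  define g where "g y = - f (- y)" for y
  have "continuous_on {-b..-a} g" unfolding g_def
    by (intro continuous_intros continuous_on_compose2[OF cont]) auto
  moreover have "\<forall>x\<in>{-b<..<-a}. \<forall>\<^sub>F h in at_right 0. g x \<le> g (x+h)"
  proof
    fix x assume "x \<in> {-b<..<-a}"
    then have "-x \<in> {a<..<b}" by auto
    then have "\<forall>\<^sub>F h in at_right 0. f (-x-h) \<le> f (-x)" using loc by auto
    then show "\<forall>\<^sub>F h in at_right 0. g x \<le> g (x+h)"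
      by eventually_elim (simp add: g_def)
  qed
  ultimately have "g (-b) \<le> g (-a)" using incr_A[of "-b" "-a" g] ab by auto
  then show ?thesis by (simp add: g_def)
qed
lemma master:
  fixes V m :: "real \<Rightarrow> real"
  assumes V0: "V 0 = 0" and d0: "d0 > 0" and cont: "continuous_on {0..d0} V"
    and mL: "(m \<longlongrightarrow> L) (at_right 0)"
    and loc: "\<forall>\<^sub>F x in at_right 0. \<forall>e>0.
       (\<forall>\<^sub>F h in at_right 0. (m x - e)*h \<le> V (x+h) - V x) \<and>
       (\<forall>\<^sub>F h in at_right 0. V x - V (x-h) \<le> (m x + e)*h)"
  shows "((\<lambda>t. V t / t) \<longlongrightarrow> L) (at_right 0)"
proof (rule tendstoI)
  fix r :: real assume r: "r > 0"
  define e where "e = r/4"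
  have e: "e > 0" using r by (simp add: e_def)
  have "\<forall>\<^sub>F x in at_right 0. dist (m x) L < e" using tendstoD[OF mL e] .
  then have "\<forall>\<^sub>F x in at_right 0. dist (m x) L < e \<and> x \<in> {0<..<d0} \<and>
       (\<forall>e>0.
       (\<forall>\<^sub>F h in at_right 0. (m x - e)*h \<le> V (x+h) - V x) \<and>
       (\<forall>\<^sub>F h in at_right 0. V x - V (x-h) \<le> (m x + e)*h))"
    using eventually_at_right_real[OF d0] loc by eventually_elim auto
  then obtain b where b: "b > 0" and Q: "\<And>x. 0 < x \<Longrightarrow> x < b \<Longrightarrow> dist (m x) L < e \<and> x \<in> {0<..<d0} \<and>
       (\<forall>e>0.
       (\<forall>\<^sub>F h in at_right 0. (m x - e)*h \<le> V (x+h) - V x) \<and>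
       (\<forall>\<^sub>F h in at_right 0. V x - V (x-h) \<le> (m x + e)*h))"
    unfolding eventually_at_right_field by auto
  have main: "dist (V t / t) L < r" if t: "0 < t" "t < b" for t
  proof -
    have td: "t < d0" using Q[OF t] by auto
    have ct: "continuous_on {0..t} V" using continuous_on_subset[OF cont] td by auto
    have low: "(L - 2*e) * t \<le> V t"
    proof -
      define f where "f = (\<lambda>x. V x - (L - 2*e) * x)"
      have "f 0 \<le> f t"
      proof (rule incr_A[of 0 t f])
        show "continuous_on {0..t} f" unfolding f_def by (intro continuous_intros ct)
        show "\<forall>x\<in>{0<..<t}. \<forall>\<^sub>F h in at_right 0. f x \<le> f (x + h)"
        proof
          fix x assume x: "x \<in> {0<..<t}"
          then have Qx: "dist (m x) L < e"
            "\<forall>\<^sub>F h in at_right 0. (m x - e)*h \<le> V (x+h) - V x"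
            using Q[of x] t e by auto
          have mx: "L - 2*e \<le> m x - e" using Qx(1) by (simp add: dist_real_def abs_less_iff)
          show "\<forall>\<^sub>F h in at_right 0. f x \<le> f (x + h)"
            using Qx(2) eventually_at_right_less[of 0]
          proof eventually_elim
            case (elim h)
            have "(L - 2*e) * h \<le> (m x - e) * h" using mx elim(2) by (intro mult_right_mono) auto
            then show ?case using elim(1) by (simp add: f_def algebra_simps)
          qed
        qed
      qed (use t in auto)
      then show ?thesis using V0 by (simp add: f_def)
    qed
    have up: "V t \<le> (L + 2*e) * t"
    proof -
      define f where "f = (\<lambda>x. (L + 2*e) * x - V x)"
      have "f 0 \<le> f t"
      proof (rule incr_B[of 0 t f])
        show "continuous_on {0..t} f" unfolding f_def by (intro continuous_intros ct)
        show "\<forall>x\<in>{0<..<t}. \<forall>\<^sub>F h in at_right 0. f (x - h) \<le> f x"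
        proof
          fix x assume x: "x \<in> {0<..<t}"
          then have Qx: "dist (m x) L < e"
            "\<forall>\<^sub>F h in at_right 0. V x - V (x-h) \<le> (m x + e)*h"
            using Q[of x] t e by auto
          have mx: "m x + e \<le> L + 2*e" using Qx(1) by (simp add: dist_real_def abs_less_iff)
          show "\<forall>\<^sub>F h in at_right 0. f (x - h) \<le> f x"
            using Qx(2) eventually_at_right_less[of 0]
          proof eventually_elim
            case (elim h)
            have "(m x + e) * h \<le> (L + 2*e) * h" using mx elim(2) by (intro mult_right_mono) auto
            then show ?case using elim(1) by (simp add: f_def algebra_simps)
          qed
        qed
      qed (use t in auto)
      then show ?thesis using V0 by (simp add: f_def)
    qed
    have "L - 2*e \<le> V t / t" using low t by (simp add: pos_le_divide_eq)
    moreover have "V t / t \<le> L + 2*e" using up t by (simp add: pos_divide_le_eq)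
    ultimately show ?thesis using e r by (simp add: dist_real_def e_def abs_le_iff)
  qed
  show "\<forall>\<^sub>F t in at_right 0. dist (V t / t) L < r"
    unfolding eventually_at_right_field using b main by auto
qed

lemma cop_rect:
  assumes "copula C" "u1 \<in> {0..1}" "u2 \<in> {0..1}" "v1 \<in> {0..1}" "v2 \<in> {0..1}" "u1 \<le> u2" "v1 \<le> v2"
  shows "C u1 v2 + C u2 v1 \<le> C u2 v2 + C u1 v1"
proof -
  have H: "\<forall>u1\<in>{0..1}. \<forall>u2\<in>{0..1}. \<forall>v1\<in>{0..1}. \<forall>v2\<in>{0..1}.
        u1 \<le> u2 \<longrightarrow> v1 \<le> v2 \<longrightarrow> C u2 v2 - C u2 v1 - C u1 v2 + C u1 v1 \<ge> 0"
    using assms(1) unfolding copula_def by blast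
  have "C u2 v2 - C u2 v1 - C u1 v2 + C u1 v1 \<ge> 0"
    using H assms(2-7) by blast
  then show ?thesis by linarith
qed

lemma cop_bd:
  assumes "copula C" "u \<in> {0..1}"
  shows "C u 0 = 0" "C 0 u = 0" "C u 1 = u" "C 1 u = u"
  using assms unfolding copula_def by auto

lemma cop_lip_u:
  assumes C: "copula C" and "u1 \<in> {0..1}" "u2 \<in> {0..1}" "v \<in> {0..1}"
  shows "\<bar>C u1 v - C u2 v\<bar> \<le> \<bar>u1 - u2\<bar>"
proof -
  have *: "0 \<le> C y v - C x v \<and> C y v - C x v \<le> y - x" if "x \<in> {0..1}" "y \<in> {0..1}" "x \<le> y" for x y
  proof -
    have "C x v + C y 0 \<le> C y v + C x 0" using cop_rect[OF C, of x y 0 v] that assms by auto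
    moreover have "C x 1 + C y v \<le> C y 1 + C x v" using cop_rect[OF C, of x y v 1] that assms by auto
    ultimately show ?thesis using cop_bd[OF C, of x] cop_bd[OF C, of y] that by auto
  qed
  show ?thesis
  proof (cases "u1 \<le> u2")
    case True then show ?thesis using *[of u1 u2] assms by auto
  next
    case False then show ?thesis using *[of u2 u1] assms by auto
  qed
qed

lemma cop_lip_v:
  assumes C: "copula C" and "v1 \<in> {0..1}" "v2 \<in> {0..1}" "u \<in> {0..1}"
  shows "\<bar>C u v1 - C u v2\<bar> \<le> \<bar>v1 - v2\<bar>"
proof -
  have *: "0 \<le> C u y - C u x \<and> C u y - C u x \<le> y - x" if "x \<in> {0..1}" "y \<in> {0..1}" "x \<le> y" for x y
  proof -
    have "C u x + C 0 y \<le> C u y + C 0 x" using cop_rect[OF C, of 0 u x y] that assms by auto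
    moreover have "C u y + C 1 x \<le> C 1 y + C u x" using cop_rect[OF C, of u 1 x y] that assms by auto
    ultimately show ?thesis using cop_bd[OF C, of x] cop_bd[OF C, of y] that by auto
  qed
  show ?thesis
  proof (cases "v1 \<le> v2")
    case True then show ?thesis using *[of v1 v2] assms by auto
  next
    case False then show ?thesis using *[of v2 v1] assms by auto
  qed
qed

lemma cop_cont:
  fixes f g :: "real \<Rightarrow> real"
  assumes C: "copula C" and f: "continuous_on S f" and g: "continuous_on S g"
    and rng: "\<forall>t\<in>S. f t \<in> {0..1} \<and> g t \<in> {0..1}"
  shows "continuous_on S (\<lambda>t. C (f t) (g t))"
proof (rule continuous_on_iff[THEN iffD2], intro ballI allI impI)
  fix x e assume x: "x \<in> S" and e: "(0::real) < e"
  obtain d1 where d1: "d1 > 0" "\<forall>x'\<in>S. dist x' x < d1 \<longrightarrow> dist (f x') (f x) < e/2"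
    using f x e unfolding continuous_on_iff by (meson half_gt_zero)
  obtain d2 where d2: "d2 > 0" "\<forall>x'\<in>S. dist x' x < d2 \<longrightarrow> dist (g x') (g x) < e/2"
    using g x e unfolding continuous_on_iff by (meson half_gt_zero)
  show "\<exists>d>0. \<forall>x'\<in>S. dist x' x < d \<longrightarrow> dist (C (f x') (g x')) (C (f x) (g x)) < e"
  proof (intro exI[of _ "min d1 d2"] conjI ballI impI)
    show "min d1 d2 > 0" using d1 d2 by simp
    fix x' assume x': "x' \<in> S" "dist x' x < min d1 d2"
    have "\<bar>C (f x') (g x') - C (f x) (g x')\<bar> \<le> \<bar>f x' - f x\<bar>"
      using cop_lip_u[OF C, of "f x'" "f x" "g x'"] rng x x' by auto
    moreover have "\<bar>C (f x) (g x') - C (f x) (g x)\<bar> \<le> \<bar>g x' - g x\<bar>"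
      using cop_lip_v[OF C, of "g x'" "g x" "f x"] rng x x' by auto
    moreover have "\<bar>f x' - f x\<bar> < e/2" "\<bar>g x' - g x\<bar> < e/2"
      using d1 d2 x' by (auto simp: dist_real_def)
    ultimately show "dist (C (f x') (g x')) (C (f x) (g x)) < e"
      unfolding dist_real_def by linarith
  qed
qed

lemma deriv_approx:
  fixes f :: "real \<Rightarrow> real"
  assumes d: "(f has_real_derivative D) (at a)" and e: "e > 0"
  shows "\<forall>\<^sub>F h in at_right 0. \<bar>f (a+h) - f a - D*h\<bar> \<le> e*h \<and> \<bar>f (a-h) - f a + D*h\<bar> \<le> e*h"
proof -
  obtain s where s: "s > 0" "\<forall>x. x \<noteq> 0 \<and> norm (x - 0) < s \<longrightarrow> norm ((f (a+x) - f a)/x - D) < e"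
    using d e unfolding DERIV_def LIM_eq by blast
  have key: "\<bar>z - D'*y\<bar> \<le> e*y" if "y > 0" "\<bar>z/y - D'\<bar> < e" for z y D'
  proof -
    have "z - D'*y = (z/y - D') * y" using that by (simp add: field_simps)
    then have "\<bar>z - D'*y\<bar> = \<bar>z/y - D'\<bar> * y" using that by (simp add: abs_mult)
    also have "\<dots> \<le> e * y" using that by (intro mult_right_mono) auto
    finally show ?thesis .
  qed
  show ?thesis unfolding eventually_at_right_field
  proof (intro exI[of _ s] conjI allI impI)
    show "s > 0" by fact
    fix y :: real assume y: "0 < y" "y < s"
    have "\<bar>(f (a+y) - f a)/y - D\<bar> < e" using s y by auto
    then show "\<bar>f (a+y) - f a - D*y\<bar> \<le> e*y" using key y by blast
    have "-y \<noteq> 0 \<and> norm (-y - 0) < s" using y by simp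
    then have "\<bar>(f (a+(-y)) - f a)/(-y) - D\<bar> < e" using s(2) by (metis real_norm_def)
    moreover have "(f (a+(-y)) - f a)/(-y) - D = - ((f (a-y) - f a + D*y)/y)" using y by (simp add: field_simps)
    ultimately have "\<bar>(f (a-y) - f a + D*y)/y - 0\<bar> < e" by simp
    then have "\<bar>(f (a-y) - f a + D*y) - 0*y\<bar> \<le> e*y" using key[of y "f (a-y) - f a + D*y" 0] y by blast
    then show "\<bar>f (a-y) - f a + D*y\<bar> \<le> e*y" by simp
  qed
qed

lemma corner:
  assumes C: "copula C" and a: "0 < a" "a < 1" and b: "0 < b" "b < 1"
    and pe: "partials_exist C a b" and e: "e > 0"
  shows "\<forall>\<^sub>F h in at_right 0.
   h*cd21 C b a + h*cd12 C a b - e*h \<le> C (a+h) (b+h) - C a b \<and>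
   C (a+h) (b-h) - C a b \<le> h*cd21 C b a - h*cd12 C a b + e*h \<and>
   C (a-h) (b+h) - C a b \<le> - h*cd21 C b a + h*cd12 C a b + e*h \<and>
   - h*cd21 C b a - h*cd12 C a b - e*h \<le> C (a-h) (b-h) - C a b"
proof -
  have d1: "((\<lambda>x. C x b) has_real_derivative cd21 C b a) (at a)"
    using pe unfolding partials_exist_def cd21_def by (simp add: DERIV_deriv_iff_real_differentiable)
  have d2: "((\<lambda>y. C a y) has_real_derivative cd12 C a b) (at b)"
    using pe unfolding partials_exist_def cd12_def by (simp add: DERIV_deriv_iff_real_differentiable)
  have e2: "e/2 > 0" using e by simp
  define c where "c = min (min a (1-a)) (min b (1-b))"
  have c: "c > 0" using a b by (simp add: c_def)
  show ?thesis
    using deriv_approx[OF d1 e2] deriv_approx[OF d2 e2] eventually_at_right_real[OF c]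
  proof eventually_elim
    case (elim h)
    have h: "0 < h" "h < a" "h < 1 - a" "h < b" "h < 1 - b" using elim(3) by (auto simp: c_def)
    have pp: "C a (b+h) + C (a+h) b \<le> C (a+h) (b+h) + C a b"
      using cop_rect[OF C, of a "a+h" b "b+h"] a b h by auto
    have pm: "C a b + C (a+h) (b-h) \<le> C (a+h) b + C a (b-h)"
      using cop_rect[OF C, of a "a+h" "b-h" b] a b h by auto
    have mp: "C (a-h) (b+h) + C a b \<le> C a (b+h) + C (a-h) b"
      using cop_rect[OF C, of "a-h" a b "b+h"] a b h by auto
    have mm: "C (a-h) b + C a (b-h) \<le> C a b + C (a-h) (b-h)"
      using cop_rect[OF C, of "a-h" a "b-h" b] a b h by auto
    have A: "\<bar>C (a+h) b - C a b - cd21 C b a*h\<bar> \<le> e/2*h" "\<bar>C (a-h) b - C a b + cd21 C b a*h\<bar> \<le> e/2*h"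
      "\<bar>C a (b+h) - C a b - cd12 C a b*h\<bar> \<le> e/2*h" "\<bar>C a (b-h) - C a b + cd12 C a b*h\<bar> \<le> e/2*h"
      using elim(1,2) by auto
    have eq: "h * cd21 C b a = cd21 C b a * h" "h * cd12 C a b = cd12 C a b * h" "e*h = 2*(e/2*h)"
      by simp_all
    show ?case using A pp pm mp mm eq unfolding abs_le_iff by linarith
  qed
qed


lemma pospart_id: "0 \<le> a \<Longrightarrow> pospart a = a" and pospart_0: "a \<le> 0 \<Longrightarrow> pospart a = 0"
  and negpart_id: "a \<le> 1 \<Longrightarrow> negpart a = a" and negpart_1: "1 \<le> a \<Longrightarrow> negpart a = 1"
  by (auto simp: pospart_def negpart_def)

lemma case1:
  assumes C: "copula C" and p: "0 < p" "p < 1" and q: "0 < q" "q < 1"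
    and pe: "\<forall>\<^sub>F t in at_right 0. partials_exist C (p+t) (q+t) \<and> partials_exist C (p+t) (q-t) \<and>
                            partials_exist C (p-t) (q+t) \<and> partials_exist C (p-t) (q-t)"
    and lim: "((\<lambda>t. cd21 C (q+t) (p+t) - cd21 C (q-t) (p+t) + cd21 C (q+t) (p-t) - cd21 C (q-t) (p-t)
           + cd12 C (p+t) (q+t) - cd12 C (p-t) (q+t) + cd12 C (p+t) (q-t) - cd12 C (p-t) (q-t))
         \<longlongrightarrow> L) (at_right 0)"
  shows "qdc_is C q p (L / 2)"
proof -
  define m where "m = (\<lambda>t. cd21 C (q+t) (p+t) - cd21 C (q-t) (p+t) + cd21 C (q+t) (p-t) - cd21 C (q-t) (p-t)
           + cd12 C (p+t) (q+t) - cd12 C (p-t) (q+t) + cd12 C (p+t) (q-t) - cd12 C (p-t) (q-t))"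
  define V where "V = (\<lambda>t. C (p+t) (q+t) - C (p+t) (q-t) - C (p-t) (q+t) + C (p-t) (q-t))"
  define d0 where "d0 = min (min p (1-p)) (min q (1-q))"
  have d0: "d0 > 0" using p q by (simp add: d0_def)
  have cc: "\<And>f g. continuous_on {0..d0} f \<Longrightarrow> continuous_on {0..d0} g \<Longrightarrow>
      \<forall>t\<in>{0..d0}. f t \<in> {0..1} \<and> g t \<in> {0..1} \<Longrightarrow> continuous_on {0..d0} (\<lambda>t. C (f t) (g t))"
    by (rule cop_cont[OF C])
  have cont: "continuous_on {0..d0} V" unfolding V_def
    by (intro continuous_on_add continuous_on_diff cc continuous_intros) (auto simp: d0_def)
  have "((\<lambda>t. V t / t) \<longlongrightarrow> L) (at_right 0)"
  proof (rule master[OF _ d0 cont])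
    show "V 0 = 0" by (simp add: V_def)
    show "(m \<longlongrightarrow> L) (at_right 0)" using lim unfolding m_def .
    show "\<forall>\<^sub>F x in at_right 0. \<forall>e>0.
       (\<forall>\<^sub>F h in at_right 0. (m x - e)*h \<le> V (x+h) - V x) \<and>
       (\<forall>\<^sub>F h in at_right 0. V x - V (x-h) \<le> (m x + e)*h)"
      using pe eventually_at_right_real[OF d0]
    proof eventually_elim
      case (elim x)
      have x: "0 < x" "x < d0" using elim(2) by auto
      have ia: "0 < p+x" "p+x < 1" "0 < p-x" "p-x < 1" "0 < q+x" "q+x < 1" "0 < q-x" "q-x < 1"
        using x by (auto simp: d0_def)
      have pex: "partials_exist C (p+x) (q+x)" "partials_exist C (p+x) (q-x)"
        "partials_exist C (p-x) (q+x)" "partials_exist C (p-x) (q-x)" using elim(1) by auto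
      show ?case
      proof (intro allI impI conjI)
        fix e :: real assume e: "e > 0"
        then have e4: "e/4 > 0" by simp
        have ev: "\<forall>\<^sub>F h in at_right 0. (h*cd21 C (q+x) (p+x) + h*cd12 C (p+x) (q+x) - e/4*h \<le> C (p+x+h) (q+x+h) - C (p+x) (q+x) \<and>
   C (p+x+h) (q+x-h) - C (p+x) (q+x) \<le> h*cd21 C (q+x) (p+x) - h*cd12 C (p+x) (q+x) + e/4*h \<and>
   C (p+x-h) (q+x+h) - C (p+x) (q+x) \<le> - h*cd21 C (q+x) (p+x) + h*cd12 C (p+x) (q+x) + e/4*h \<and>
   - h*cd21 C (q+x) (p+x) - h*cd12 C (p+x) (q+x) - e/4*h \<le> C (p+x-h) (q+x-h) - C (p+x) (q+x)) \<and>
   (h*cd21 C (q-x) (p+x) + h*cd12 C (p+x) (q-x) - e/4*h \<le> C (p+x+h) (q-x+h) - C (p+x) (q-x) \<and>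
   C (p+x+h) (q-x-h) - C (p+x) (q-x) \<le> h*cd21 C (q-x) (p+x) - h*cd12 C (p+x) (q-x) + e/4*h \<and>
   C (p+x-h) (q-x+h) - C (p+x) (q-x) \<le> - h*cd21 C (q-x) (p+x) + h*cd12 C (p+x) (q-x) + e/4*h \<and>
   - h*cd21 C (q-x) (p+x) - h*cd12 C (p+x) (q-x) - e/4*h \<le> C (p+x-h) (q-x-h) - C (p+x) (q-x)) \<and>
   (h*cd21 C (q+x) (p-x) + h*cd12 C (p-x) (q+x) - e/4*h \<le> C (p-x+h) (q+x+h) - C (p-x) (q+x) \<and>
   C (p-x+h) (q+x-h) - C (p-x) (q+x) \<le> h*cd21 C (q+x) (p-x) - h*cd12 C (p-x) (q+x) + e/4*h \<and>
   C (p-x-h) (q+x+h) - C (p-x) (q+x) \<le> - h*cd21 C (q+x) (p-x) + h*cd12 C (p-x) (q+x) + e/4*h \<and>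
   - h*cd21 C (q+x) (p-x) - h*cd12 C (p-x) (q+x) - e/4*h \<le> C (p-x-h) (q+x-h) - C (p-x) (q+x)) \<and>
   (h*cd21 C (q-x) (p-x) + h*cd12 C (p-x) (q-x) - e/4*h \<le> C (p-x+h) (q-x+h) - C (p-x) (q-x) \<and>
   C (p-x+h) (q-x-h) - C (p-x) (q-x) \<le> h*cd21 C (q-x) (p-x) - h*cd12 C (p-x) (q-x) + e/4*h \<and>
   C (p-x-h) (q-x+h) - C (p-x) (q-x) \<le> - h*cd21 C (q-x) (p-x) + h*cd12 C (p-x) (q-x) + e/4*h \<and>
   - h*cd21 C (q-x) (p-x) - h*cd12 C (p-x) (q-x) - e/4*h \<le> C (p-x-h) (q-x-h) - C (p-x) (q-x))"
          using corner[OF C ia(1,2) ia(5,6) pex(1) e4] corner[OF C ia(1,2) ia(7,8) pex(2) e4]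
            corner[OF C ia(3,4) ia(5,6) pex(3) e4] corner[OF C ia(3,4) ia(7,8) pex(4) e4]
          by eventually_elim blast
        show "\<forall>\<^sub>F h in at_right 0. (m x - e)*h \<le> V (x+h) - V x"
          using ev
        proof eventually_elim
          case (elim h)
          have r: "C (p+(x+h)) (q+(x+h)) = C (p+x+h) (q+x+h)" "C (p+(x+h)) (q-(x+h)) = C (p+x+h) (q-x-h)"
            "C (p-(x+h)) (q+(x+h)) = C (p-x-h) (q+x+h)" "C (p-(x+h)) (q-(x+h)) = C (p-x-h) (q-x-h)"
            by (simp_all add: algebra_simps)
          have "(m x - e)*h = h*cd21 C (q+x) (p+x) - h*cd21 C (q-x) (p+x) + h*cd21 C (q+x) (p-x) - h*cd21 C (q-x) (p-x)
           + h*cd12 C (p+x) (q+x) - h*cd12 C (p-x) (q+x) + h*cd12 C (p+x) (q-x) - h*cd12 C (p-x) (q-x) - 4*(e/4*h)"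
            by (simp add: m_def algebra_simps)
          then show ?case using elim unfolding V_def r by linarith
        qed
        show "\<forall>\<^sub>F h in at_right 0. V x - V (x-h) \<le> (m x + e)*h"
          using ev
        proof eventually_elim
          case (elim h)
          have r: "C (p+(x-h)) (q+(x-h)) = C (p+x-h) (q+x-h)" "C (p+(x-h)) (q-(x-h)) = C (p+x-h) (q-x+h)"
            "C (p-(x-h)) (q+(x-h)) = C (p-x+h) (q+x-h)" "C (p-(x-h)) (q-(x-h)) = C (p-x+h) (q-x+h)"
            by (simp_all add: algebra_simps)
          have "(m x + e)*h = h*cd21 C (q+x) (p+x) - h*cd21 C (q-x) (p+x) + h*cd21 C (q+x) (p-x) - h*cd21 C (q-x) (p-x)
           + h*cd12 C (p+x) (q+x) - h*cd12 C (p-x) (q+x) + h*cd12 C (p+x) (q-x) - h*cd12 C (p-x) (q-x) + 4*(e/4*h)"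
            by (simp add: m_def algebra_simps)
          then show ?case using elim unfolding V_def r by linarith
        qed
      qed
    qed
  qed
  then have lim2: "((\<lambda>t. V t / t / 2) \<longlongrightarrow> L / 2) (at_right 0)" by (intro tendsto_divide tendsto_const) auto
  have ev: "\<forall>\<^sub>F t in at_right 0. qd_ratio C q p t = V t / t / 2"
    using eventually_at_right_real[OF d0]
  proof eventually_elim
    case (elim t)
    then have t: "0 < t" "t < d0" by auto
    have "pospart (p - t) = p - t" "negpart (p + t) = p + t" "pospart (q - t) = q - t" "negpart (q + t) = q + t"
      using t by (auto simp: d0_def intro!: pospart_id negpart_id)
    then show ?case unfolding qd_ratio_def Cvol_def V_def by simp
  qed
  show ?thesis unfolding qdc_is_def using tendsto_cong[OF ev] lim2 by blast
qed


lemma case2: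
  assumes C: "copula C" and p: "0 < p" "p < 1" and pe: "\<forall>\<^sub>F t in at_right 0. partials_exist C (p+t) t \<and> partials_exist C (p-t) t"
    and lim: "((\<lambda>t. cd21 C t (p+t) + cd21 C t (p-t) + cd12 C (p+t) t - cd12 C (p-t) t) \<longlongrightarrow> L) (at_right 0)"
  shows "qdc_is C 0 p (L / 2)"
proof -
  define m where "m = (\<lambda>t::real. cd21 C t (p+t) + cd21 C t (p-t) + cd12 C (p+t) t - cd12 C (p-t) t)"
  define V where "V = (\<lambda>t::real. C (p+t) t - C (p-t) t)"
  define d0 :: real where "d0 = min p (1-p)"
  have d0: "d0 > 0" using assms by (simp add: d0_def)
  have cc: "\<And>f g. continuous_on {0..d0} f \<Longrightarrow> continuous_on {0..d0} g \<Longrightarrow>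
      \<forall>t\<in>{0..d0}. f t \<in> {0..1} \<and> g t \<in> {0..1} \<Longrightarrow> continuous_on {0..d0} (\<lambda>t. C (f t) (g t))"
    by (rule cop_cont[OF C])
  have cont: "continuous_on {0..d0} V" unfolding V_def
    by (intro continuous_on_add continuous_on_diff continuous_on_minus cc continuous_intros) (use assms in \<open>auto simp: d0_def\<close>)
  have "((\<lambda>t. V t / t) \<longlongrightarrow> L) (at_right 0)"
  proof (rule master[OF _ d0 cont])
    show "V 0 = 0" using cop_bd[OF C, of 0] cop_bd[OF C, of 1] by (simp add: V_def)
    show "(m \<longlongrightarrow> L) (at_right 0)" unfolding m_def using lim by simp
    show "\<forall>\<^sub>F x in at_right 0. \<forall>e>0.
       (\<forall>\<^sub>F h in at_right 0. (m x - e)*h \<le> V (x+h) - V x) \<and>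
       (\<forall>\<^sub>F h in at_right 0. V x - V (x-h) \<le> (m x + e)*h)"
      using pe eventually_at_right_real[OF d0]
    proof eventually_elim
      case (elim x)
      have x: "0 < x" "x < d0" using elim(2) by auto
      have ia: "0 < p+x" "p+x < 1" "0 < x" "x < 1" "0 < p-x" "p-x < 1" "0 < x" "x < 1"
        using x assms by (auto simp: d0_def)
      have pex: "partials_exist C (p+x) (x)" "partials_exist C (p-x) (x)" using elim(1) by auto
      show ?case
      proof (intro allI impI conjI)
        fix e :: real assume e: "e > 0"
        then have ek: "e/2 > 0" by simp
        show "\<forall>\<^sub>F h in at_right 0. (m x - e)*h \<le> V (x+h) - V x"
          using corner[OF C ia(1,2) ia(3,4) pex(1) ek] corner[OF C ia(5,6) ia(7,8) pex(2) ek]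
        proof eventually_elim
          case (elim h)
          have r: "C (p+(x+h)) (x+h) = C (p+x+h) (x+h)" "C (p-(x+h)) (x+h) = C (p-x-h) (x+h)"
            by (simp_all add: algebra_simps)
          have "(m x - e)*h = h*cd21 C x (p+x) + h*cd21 C x (p-x) + h*cd12 C (p+x) x - h*cd12 C (p-x) x - 2*(e/2*h)"
            by (simp add: m_def algebra_simps)
          then show ?case using elim unfolding V_def r by linarith
        qed
        show "\<forall>\<^sub>F h in at_right 0. V x - V (x-h) \<le> (m x + e)*h"
          using corner[OF C ia(1,2) ia(3,4) pex(1) ek] corner[OF C ia(5,6) ia(7,8) pex(2) ek]
        proof eventually_elim
          case (elim h)
          have r: "C (p+(x-h)) (x-h) = C (p+x-h) (x-h)" "C (p-(x-h)) (x-h) = C (p-x+h) (x-h)"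
            by (simp_all add: algebra_simps)
          have "(m x + e)*h = h*cd21 C x (p+x) + h*cd21 C x (p-x) + h*cd12 C (p+x) x - h*cd12 C (p-x) x + 2*(e/2*h)"
            by (simp add: m_def algebra_simps)
          then show ?case using elim unfolding V_def r by linarith
        qed
      qed
    qed
  qed
  then have lim2: "((\<lambda>t. V t / t / 2) \<longlongrightarrow> L / 2) (at_right 0)" by (assumption | (intro tendsto_intros, auto))
  have ev: "\<forall>\<^sub>F t in at_right 0. qd_ratio C 0 p t = V t / t / 2"
    using eventually_at_right_real[OF d0]
  proof eventually_elim
    case (elim t)
    then have t: "0 < t" "t < d0" by auto
    have pn: "pospart (p - t) = p - t" "negpart (p + t) = p + t" "pospart (0 - t) = 0" "negpart (0 + t) = t"

      using t assms by (auto simp: d0_def intro!: pospart_id negpart_id pospart_0 negpart_1)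
    have mem: "p - t \<in> {0..1}" "p + t \<in> {0..1}" "t \<in> {0..1}" "1 - t \<in> {0..1}" using t assms by (auto simp: d0_def)
    show ?case unfolding qd_ratio_def Cvol_def V_def pn using t mem
      by (simp add: cop_bd[OF C] field_simps)
  qed
  have "(qd_ratio C 0 p \<longlongrightarrow> L / 2) (at_right 0)" using tendsto_cong[OF ev] lim2 by blast
  then show ?thesis unfolding qdc_is_def by simp
qed

lemma case3:
  assumes C: "copula C" and p: "0 < p" "p < 1" and pe: "\<forall>\<^sub>F t in at_right 0. partials_exist C (p+t) (1-t) \<and> partials_exist C (p-t) (1-t)"
    and lim: "((\<lambda>t. cd21 C (1-t) (p+t) + cd21 C (1-t) (p-t) - cd12 C (p+t) (1-t) + cd12 C (p-t) (1-t))
         \<longlongrightarrow> L) (at_right 0)"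
  shows "qdc_is C 1 p (1 - L / 2)"
proof -
  define m where "m = (\<lambda>t::real. - (cd21 C (1-t) (p+t) + cd21 C (1-t) (p-t) - cd12 C (p+t) (1-t) + cd12 C (p-t) (1-t)))"
  define V where "V = (\<lambda>t::real. C (p-t) (1-t) - C (p+t) (1-t))"
  define d0 :: real where "d0 = min p (1-p)"
  have d0: "d0 > 0" using assms by (simp add: d0_def)
  have cc: "\<And>f g. continuous_on {0..d0} f \<Longrightarrow> continuous_on {0..d0} g \<Longrightarrow>
      \<forall>t\<in>{0..d0}. f t \<in> {0..1} \<and> g t \<in> {0..1} \<Longrightarrow> continuous_on {0..d0} (\<lambda>t. C (f t) (g t))"
    by (rule cop_cont[OF C])
  have cont: "continuous_on {0..d0} V" unfolding V_def
    by (intro continuous_on_add continuous_on_diff continuous_on_minus cc continuous_intros) (use assms in \<open>auto simp: d0_def\<close>)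
  have "((\<lambda>t. V t / t) \<longlongrightarrow> - L) (at_right 0)"
  proof (rule master[OF _ d0 cont])
    show "V 0 = 0" using cop_bd[OF C, of 0] cop_bd[OF C, of 1] by (simp add: V_def)
    show "(m \<longlongrightarrow> - L) (at_right 0)" unfolding m_def using lim by (intro tendsto_intros)
    show "\<forall>\<^sub>F x in at_right 0. \<forall>e>0.
       (\<forall>\<^sub>F h in at_right 0. (m x - e)*h \<le> V (x+h) - V x) \<and>
       (\<forall>\<^sub>F h in at_right 0. V x - V (x-h) \<le> (m x + e)*h)"
      using pe eventually_at_right_real[OF d0]
    proof eventually_elim
      case (elim x)
      have x: "0 < x" "x < d0" using elim(2) by auto
      have ia: "0 < p+x" "p+x < 1" "0 < 1-x" "1-x < 1" "0 < p-x" "p-x < 1" "0 < 1-x" "1-x < 1"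
        using x assms by (auto simp: d0_def)
      have pex: "partials_exist C (p+x) (1-x)" "partials_exist C (p-x) (1-x)" using elim(1) by auto
      show ?case
      proof (intro allI impI conjI)
        fix e :: real assume e: "e > 0"
        then have ek: "e/2 > 0" by simp
        show "\<forall>\<^sub>F h in at_right 0. (m x - e)*h \<le> V (x+h) - V x"
          using corner[OF C ia(1,2) ia(3,4) pex(1) ek] corner[OF C ia(5,6) ia(7,8) pex(2) ek]
        proof eventually_elim
          case (elim h)
          have r: "C (p-(x+h)) (1-(x+h)) = C (p-x-h) (1-x-h)" "C (p+(x+h)) (1-(x+h)) = C (p+x+h) (1-x-h)"
            by (simp_all add: algebra_simps)
          have "(m x - e)*h = - (h*cd21 C (1-x) (p+x)) - h*cd21 C (1-x) (p-x) + h*cd12 C (p+x) (1-x) - h*cd12 C (p-x) (1-x) - 2*(e/2*h)"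
            by (simp add: m_def algebra_simps)
          then show ?case using elim unfolding V_def r by linarith
        qed
        show "\<forall>\<^sub>F h in at_right 0. V x - V (x-h) \<le> (m x + e)*h"
          using corner[OF C ia(1,2) ia(3,4) pex(1) ek] corner[OF C ia(5,6) ia(7,8) pex(2) ek]
        proof eventually_elim
          case (elim h)
          have r: "C (p-(x-h)) (1-(x-h)) = C (p-x+h) (1-x+h)" "C (p+(x-h)) (1-(x-h)) = C (p+x-h) (1-x+h)"
            by (simp_all add: algebra_simps)
          have "(m x + e)*h = - (h*cd21 C (1-x) (p+x)) - h*cd21 C (1-x) (p-x) + h*cd12 C (p+x) (1-x) - h*cd12 C (p-x) (1-x) + 2*(e/2*h)"
            by (simp add: m_def algebra_simps)
          then show ?case using elim unfolding V_def r by linarith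
        qed
      qed
    qed
  qed
  then have lim2: "((\<lambda>t. 1 + V t / t / 2) \<longlongrightarrow> 1 + (- L) / 2) (at_right 0)" by (assumption | (intro tendsto_intros, auto))
  have ev: "\<forall>\<^sub>F t in at_right 0. qd_ratio C 1 p t = 1 + V t / t / 2"
    using eventually_at_right_real[OF d0]
  proof eventually_elim
    case (elim t)
    then have t: "0 < t" "t < d0" by auto
    have pn: "pospart (p - t) = p - t" "negpart (p + t) = p + t" "pospart (1 - t) = 1 - t" "negpart (1 + t) = 1"

      using t assms by (auto simp: d0_def intro!: pospart_id negpart_id pospart_0 negpart_1)
    have mem: "p - t \<in> {0..1}" "p + t \<in> {0..1}" "t \<in> {0..1}" "1 - t \<in> {0..1}" using t assms by (auto simp: d0_def)
    show ?case unfolding qd_ratio_def Cvol_def V_def pn using t mem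
      by (simp add: cop_bd[OF C] field_simps)
  qed
  have "(qd_ratio C 1 p \<longlongrightarrow> 1 + (- L) / 2) (at_right 0)" using tendsto_cong[OF ev] lim2 by blast
  then show ?thesis unfolding qdc_is_def by simp
qed

lemma case4:
  assumes C: "copula C" and q: "0 < q" "q < 1" and pe: "\<forall>\<^sub>F t in at_right 0. partials_exist C t (q+t) \<and> partials_exist C t (q-t)"
    and lim: "((\<lambda>t. cd21 C (q+t) t - cd21 C (q-t) t + cd12 C t (q+t) + cd12 C t (q-t)) \<longlongrightarrow> L) (at_right 0)"
  shows "qdc_is C q 0 L"
proof -
  define m where "m = (\<lambda>t::real. cd21 C (q+t) t - cd21 C (q-t) t + cd12 C t (q+t) + cd12 C t (q-t))"
  define V where "V = (\<lambda>t::real. C t (q+t) - C t (q-t))"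
  define d0 :: real where "d0 = min q (1-q)"
  have d0: "d0 > 0" using assms by (simp add: d0_def)
  have cc: "\<And>f g. continuous_on {0..d0} f \<Longrightarrow> continuous_on {0..d0} g \<Longrightarrow>
      \<forall>t\<in>{0..d0}. f t \<in> {0..1} \<and> g t \<in> {0..1} \<Longrightarrow> continuous_on {0..d0} (\<lambda>t. C (f t) (g t))"
    by (rule cop_cont[OF C])
  have cont: "continuous_on {0..d0} V" unfolding V_def
    by (intro continuous_on_add continuous_on_diff continuous_on_minus cc continuous_intros) (use assms in \<open>auto simp: d0_def\<close>)
  have "((\<lambda>t. V t / t) \<longlongrightarrow> L) (at_right 0)"
  proof (rule master[OF _ d0 cont])
    show "V 0 = 0" using cop_bd[OF C, of 0] cop_bd[OF C, of 1] by (simp add: V_def)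
    show "(m \<longlongrightarrow> L) (at_right 0)" unfolding m_def using lim by simp
    show "\<forall>\<^sub>F x in at_right 0. \<forall>e>0.
       (\<forall>\<^sub>F h in at_right 0. (m x - e)*h \<le> V (x+h) - V x) \<and>
       (\<forall>\<^sub>F h in at_right 0. V x - V (x-h) \<le> (m x + e)*h)"
      using pe eventually_at_right_real[OF d0]
    proof eventually_elim
      case (elim x)
      have x: "0 < x" "x < d0" using elim(2) by auto
      have ia: "0 < x" "x < 1" "0 < q+x" "q+x < 1" "0 < x" "x < 1" "0 < q-x" "q-x < 1"
        using x assms by (auto simp: d0_def)
      have pex: "partials_exist C (x) (q+x)" "partials_exist C (x) (q-x)" using elim(1) by auto
      show ?case
      proof (intro allI impI conjI)
        fix e :: real assume e: "e > 0"
        then have ek: "e/2 > 0" by simp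
        show "\<forall>\<^sub>F h in at_right 0. (m x - e)*h \<le> V (x+h) - V x"
          using corner[OF C ia(1,2) ia(3,4) pex(1) ek] corner[OF C ia(5,6) ia(7,8) pex(2) ek]
        proof eventually_elim
          case (elim h)
          have r: "C (x+h) (q+(x+h)) = C (x+h) (q+x+h)" "C (x+h) (q-(x+h)) = C (x+h) (q-x-h)"
            by (simp_all add: algebra_simps)
          have "(m x - e)*h = h*cd21 C (q+x) x - h*cd21 C (q-x) x + h*cd12 C x (q+x) + h*cd12 C x (q-x) - 2*(e/2*h)"
            by (simp add: m_def algebra_simps)
          then show ?case using elim unfolding V_def r by linarith
        qed
        show "\<forall>\<^sub>F h in at_right 0. V x - V (x-h) \<le> (m x + e)*h"
          using corner[OF C ia(1,2) ia(3,4) pex(1) ek] corner[OF C ia(5,6) ia(7,8) pex(2) ek]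
        proof eventually_elim
          case (elim h)
          have r: "C (x-h) (q+(x-h)) = C (x-h) (q+x-h)" "C (x-h) (q-(x-h)) = C (x-h) (q-x+h)"
            by (simp_all add: algebra_simps)
          have "(m x + e)*h = h*cd21 C (q+x) x - h*cd21 C (q-x) x + h*cd12 C x (q+x) + h*cd12 C x (q-x) + 2*(e/2*h)"
            by (simp add: m_def algebra_simps)
          then show ?case using elim unfolding V_def r by linarith
        qed
      qed
    qed
  qed
  then have lim2: "((\<lambda>t. V t / t) \<longlongrightarrow> L) (at_right 0)" by (assumption | (intro tendsto_intros, auto))
  have ev: "\<forall>\<^sub>F t in at_right 0. qd_ratio C q 0 t = V t / t"
    using eventually_at_right_real[OF d0]
  proof eventually_elim
    case (elim t)
    then have t: "0 < t" "t < d0" by auto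
    have pn: "pospart (0 - t) = 0" "negpart (0 + t) = t" "pospart (q - t) = q - t" "negpart (q + t) = q + t"

      using t assms by (auto simp: d0_def intro!: pospart_id negpart_id pospart_0 negpart_1)
    have mem: "q - t \<in> {0..1}" "q + t \<in> {0..1}" "t \<in> {0..1}" "1 - t \<in> {0..1}" using t assms by (auto simp: d0_def)
    show ?case unfolding qd_ratio_def Cvol_def V_def pn using t mem
      by (simp add: cop_bd[OF C] field_simps)
  qed
  have "(qd_ratio C q 0 \<longlongrightarrow> L) (at_right 0)" using tendsto_cong[OF ev] lim2 by blast
  then show ?thesis unfolding qdc_is_def by simp
qed

lemma case5:
  assumes C: "copula C" and q: "0 < q" "q < 1" and pe: "\<forall>\<^sub>F t in at_right 0. partials_exist C (1-t) (q+t) \<and> partials_exist C (1-t) (q-t)"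
    and lim: "((\<lambda>t. cd12 C (1-t) (q+t) + cd12 C (1-t) (q-t) - cd21 C (q+t) (1-t) + cd21 C (q-t) (1-t))
         \<longlongrightarrow> L) (at_right 0)"
  shows "qdc_is C q 1 (2 - L)"
proof -
  define m where "m = (\<lambda>t::real. - (cd12 C (1-t) (q+t) + cd12 C (1-t) (q-t) - cd21 C (q+t) (1-t) + cd21 C (q-t) (1-t)))"
  define V where "V = (\<lambda>t::real. C (1-t) (q-t) - C (1-t) (q+t))"
  define d0 :: real where "d0 = min q (1-q)"
  have d0: "d0 > 0" using assms by (simp add: d0_def)
  have cc: "\<And>f g. continuous_on {0..d0} f \<Longrightarrow> continuous_on {0..d0} g \<Longrightarrow>
      \<forall>t\<in>{0..d0}. f t \<in> {0..1} \<and> g t \<in> {0..1} \<Longrightarrow> continuous_on {0..d0} (\<lambda>t. C (f t) (g t))"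
    by (rule cop_cont[OF C])
  have cont: "continuous_on {0..d0} V" unfolding V_def
    by (intro continuous_on_add continuous_on_diff continuous_on_minus cc continuous_intros) (use assms in \<open>auto simp: d0_def\<close>)
  have "((\<lambda>t. V t / t) \<longlongrightarrow> - L) (at_right 0)"
  proof (rule master[OF _ d0 cont])
    show "V 0 = 0" using cop_bd[OF C, of 0] cop_bd[OF C, of 1] by (simp add: V_def)
    show "(m \<longlongrightarrow> - L) (at_right 0)" unfolding m_def using lim by (intro tendsto_intros)
    show "\<forall>\<^sub>F x in at_right 0. \<forall>e>0.
       (\<forall>\<^sub>F h in at_right 0. (m x - e)*h \<le> V (x+h) - V x) \<and>
       (\<forall>\<^sub>F h in at_right 0. V x - V (x-h) \<le> (m x + e)*h)"
      using pe eventually_at_right_real[OF d0]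
    proof eventually_elim
      case (elim x)
      have x: "0 < x" "x < d0" using elim(2) by auto
      have ia: "0 < 1-x" "1-x < 1" "0 < q+x" "q+x < 1" "0 < 1-x" "1-x < 1" "0 < q-x" "q-x < 1"
        using x assms by (auto simp: d0_def)
      have pex: "partials_exist C (1-x) (q+x)" "partials_exist C (1-x) (q-x)" using elim(1) by auto
      show ?case
      proof (intro allI impI conjI)
        fix e :: real assume e: "e > 0"
        then have ek: "e/2 > 0" by simp
        show "\<forall>\<^sub>F h in at_right 0. (m x - e)*h \<le> V (x+h) - V x"
          using corner[OF C ia(1,2) ia(3,4) pex(1) ek] corner[OF C ia(5,6) ia(7,8) pex(2) ek]
        proof eventually_elim
          case (elim h)
          have r: "C (1-(x+h)) (q-(x+h)) = C (1-x-h) (q-x-h)" "C (1-(x+h)) (q+(x+h)) = C (1-x-h) (q+x+h)"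
            by (simp_all add: algebra_simps)
          have "(m x - e)*h = - (h*cd12 C (1-x) (q+x)) - h*cd12 C (1-x) (q-x) + h*cd21 C (q+x) (1-x) - h*cd21 C (q-x) (1-x) - 2*(e/2*h)"
            by (simp add: m_def algebra_simps)
          then show ?case using elim unfolding V_def r by linarith
        qed
        show "\<forall>\<^sub>F h in at_right 0. V x - V (x-h) \<le> (m x + e)*h"
          using corner[OF C ia(1,2) ia(3,4) pex(1) ek] corner[OF C ia(5,6) ia(7,8) pex(2) ek]
        proof eventually_elim
          case (elim h)
          have r: "C (1-(x-h)) (q-(x-h)) = C (1-x+h) (q-x+h)" "C (1-(x-h)) (q+(x-h)) = C (1-x+h) (q+x-h)"
            by (simp_all add: algebra_simps)
          have "(m x + e)*h = - (h*cd12 C (1-x) (q+x)) - h*cd12 C (1-x) (q-x) + h*cd21 C (q+x) (1-x) - h*cd21 C (q-x) (1-x) + 2*(e/2*h)"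
            by (simp add: m_def algebra_simps)
          then show ?case using elim unfolding V_def r by linarith
        qed
      qed
    qed
  qed
  then have lim2: "((\<lambda>t. 2 + V t / t) \<longlongrightarrow> 2 + (- L)) (at_right 0)" by (assumption | (intro tendsto_intros, auto))
  have ev: "\<forall>\<^sub>F t in at_right 0. qd_ratio C q 1 t = 2 + V t / t"
    using eventually_at_right_real[OF d0]
  proof eventually_elim
    case (elim t)
    then have t: "0 < t" "t < d0" by auto
    have pn: "pospart (1 - t) = 1 - t" "negpart (1 + t) = 1" "pospart (q - t) = q - t" "negpart (q + t) = q + t"

      using t assms by (auto simp: d0_def intro!: pospart_id negpart_id pospart_0 negpart_1)
    have mem: "q - t \<in> {0..1}" "q + t \<in> {0..1}" "t \<in> {0..1}" "1 - t \<in> {0..1}" using t assms by (auto simp: d0_def)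
    show ?case unfolding qd_ratio_def Cvol_def V_def pn using t mem
      by (simp add: cop_bd[OF C] field_simps)
  qed
  have "(qd_ratio C q 1 \<longlongrightarrow> 2 + (- L)) (at_right 0)" using tendsto_cong[OF ev] lim2 by blast
  then show ?thesis unfolding qdc_is_def by simp
qed

lemma case6:
  assumes C: "copula C" and pe: "\<forall>\<^sub>F t in at_right 0. partials_exist C t (1-t)"
    and lim: "((\<lambda>t. cd21 C (1-t) t - cd12 C t (1-t)) \<longlongrightarrow> L) (at_right 0)"
  shows "qdc_is C 1 0 (1 - L)"
proof -
  define m where "m = (\<lambda>t::real. - (cd21 C (1-t) t - cd12 C t (1-t)))"
  define V where "V = (\<lambda>t::real. - C t (1-t))"
  define d0 :: real where "d0 = 1/2"
  have d0: "d0 > 0" using assms by (simp add: d0_def)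
  have cc: "\<And>f g. continuous_on {0..d0} f \<Longrightarrow> continuous_on {0..d0} g \<Longrightarrow>
      \<forall>t\<in>{0..d0}. f t \<in> {0..1} \<and> g t \<in> {0..1} \<Longrightarrow> continuous_on {0..d0} (\<lambda>t. C (f t) (g t))"
    by (rule cop_cont[OF C])
  have cont: "continuous_on {0..d0} V" unfolding V_def
    by (intro continuous_on_add continuous_on_diff continuous_on_minus cc continuous_intros) (use assms in \<open>auto simp: d0_def\<close>)
  have "((\<lambda>t. V t / t) \<longlongrightarrow> - L) (at_right 0)"
  proof (rule master[OF _ d0 cont])
    show "V 0 = 0" using cop_bd[OF C, of 0] cop_bd[OF C, of 1] by (simp add: V_def)
    show "(m \<longlongrightarrow> - L) (at_right 0)" unfolding m_def using lim by (intro tendsto_intros)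
    show "\<forall>\<^sub>F x in at_right 0. \<forall>e>0.
       (\<forall>\<^sub>F h in at_right 0. (m x - e)*h \<le> V (x+h) - V x) \<and>
       (\<forall>\<^sub>F h in at_right 0. V x - V (x-h) \<le> (m x + e)*h)"
      using pe eventually_at_right_real[OF d0]
    proof eventually_elim
      case (elim x)
      have x: "0 < x" "x < d0" using elim(2) by auto
      have ia: "0 < x" "x < 1" "0 < 1-x" "1-x < 1"
        using x assms by (auto simp: d0_def)
      have pex: "partials_exist C (x) (1-x)" using elim(1) by auto
      show ?case
      proof (intro allI impI conjI)
        fix e :: real assume e: "e > 0"
        then have ek: "e > 0" by simp
        show "\<forall>\<^sub>F h in at_right 0. (m x - e)*h \<le> V (x+h) - V x"
          using corner[OF C ia(1,2) ia(3,4) pex(1) ek]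
        proof eventually_elim
          case (elim h)
          have r: "C (x+h) (1-(x+h)) = C (x+h) (1-x-h)"
            by (simp_all add: algebra_simps)
          have "(m x - e)*h = - (h*cd21 C (1-x) x) + h*cd12 C x (1-x) - e*h"
            by (simp add: m_def algebra_simps)
          then show ?case using elim unfolding V_def r by linarith
        qed
        show "\<forall>\<^sub>F h in at_right 0. V x - V (x-h) \<le> (m x + e)*h"
          using corner[OF C ia(1,2) ia(3,4) pex(1) ek]
        proof eventually_elim
          case (elim h)
          have r: "C (x-h) (1-(x-h)) = C (x-h) (1-x+h)"
            by (simp_all add: algebra_simps)
          have "(m x + e)*h = - (h*cd21 C (1-x) x) + h*cd12 C x (1-x) + e*h"
            by (simp add: m_def algebra_simps)
          then show ?case using elim unfolding V_def r by linarith
        qed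
      qed
    qed
  qed
  then have lim2: "((\<lambda>t. 1 + V t / t) \<longlongrightarrow> 1 + (- L)) (at_right 0)" by (assumption | (intro tendsto_intros, auto))
  have ev: "\<forall>\<^sub>F t in at_right 0. qd_ratio C 1 0 t = 1 + V t / t"
    using eventually_at_right_real[OF d0]
  proof eventually_elim
    case (elim t)
    then have t: "0 < t" "t < d0" by auto
    have pn: "pospart (0 - t) = 0" "negpart (0 + t) = t" "pospart (1 - t) = 1 - t" "negpart (1 + t) = 1"
      using t assms by (auto simp: d0_def intro!: pospart_id negpart_id pospart_0 negpart_1)
    have mem:  "t \<in> {0..1}" "1 - t \<in> {0..1}" using t assms by (auto simp: d0_def)
    show ?case unfolding qd_ratio_def Cvol_def V_def pn using t mem
      by (simp add: cop_bd[OF C] field_simps)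
  qed
  have "(qd_ratio C 1 0 \<longlongrightarrow> 1 + (- L)) (at_right 0)" using tendsto_cong[OF ev] lim2 by blast
  then show ?thesis unfolding qdc_is_def by simp
qed

lemma case7:
  assumes C: "copula C" and pe: "\<forall>\<^sub>F t in at_right 0. partials_exist C (1-t) t"
    and lim: "((\<lambda>t. cd12 C (1-t) t - cd21 C t (1-t)) \<longlongrightarrow> L) (at_right 0)"
  shows "qdc_is C 0 1 (1 - L)"
proof -
  define m where "m = (\<lambda>t::real. - (cd12 C (1-t) t - cd21 C t (1-t)))"
  define V where "V = (\<lambda>t::real. - C (1-t) t)"
  define d0 :: real where "d0 = 1/2"
  have d0: "d0 > 0" using assms by (simp add: d0_def)
  have cc: "\<And>f g. continuous_on {0..d0} f \<Longrightarrow> continuous_on {0..d0} g \<Longrightarrow>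
      \<forall>t\<in>{0..d0}. f t \<in> {0..1} \<and> g t \<in> {0..1} \<Longrightarrow> continuous_on {0..d0} (\<lambda>t. C (f t) (g t))"
    by (rule cop_cont[OF C])
  have cont: "continuous_on {0..d0} V" unfolding V_def
    by (intro continuous_on_add continuous_on_diff continuous_on_minus cc continuous_intros) (use assms in \<open>auto simp: d0_def\<close>)
  have "((\<lambda>t. V t / t) \<longlongrightarrow> - L) (at_right 0)"
  proof (rule master[OF _ d0 cont])
    show "V 0 = 0" using cop_bd[OF C, of 0] cop_bd[OF C, of 1] by (simp add: V_def)
    show "(m \<longlongrightarrow> - L) (at_right 0)" unfolding m_def using lim by (intro tendsto_intros)
    show "\<forall>\<^sub>F x in at_right 0. \<forall>e>0.
       (\<forall>\<^sub>F h in at_right 0. (m x - e)*h \<le> V (x+h) - V x) \<and>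
       (\<forall>\<^sub>F h in at_right 0. V x - V (x-h) \<le> (m x + e)*h)"
      using pe eventually_at_right_real[OF d0]
    proof eventually_elim
      case (elim x)
      have x: "0 < x" "x < d0" using elim(2) by auto
      have ia: "0 < 1-x" "1-x < 1" "0 < x" "x < 1"
        using x assms by (auto simp: d0_def)
      have pex: "partials_exist C (1-x) (x)" using elim(1) by auto
      show ?case
      proof (intro allI impI conjI)
        fix e :: real assume e: "e > 0"
        then have ek: "e > 0" by simp
        show "\<forall>\<^sub>F h in at_right 0. (m x - e)*h \<le> V (x+h) - V x"
          using corner[OF C ia(1,2) ia(3,4) pex(1) ek]
        proof eventually_elim
          case (elim h)
          have r: "C (1-(x+h)) (x+h) = C (1-x-h) (x+h)"
            by (simp_all add: algebra_simps)
          have "(m x - e)*h = - (h*cd12 C (1-x) x) + h*cd21 C x (1-x) - e*h"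
            by (simp add: m_def algebra_simps)
          then show ?case using elim unfolding V_def r by linarith
        qed
        show "\<forall>\<^sub>F h in at_right 0. V x - V (x-h) \<le> (m x + e)*h"
          using corner[OF C ia(1,2) ia(3,4) pex(1) ek]
        proof eventually_elim
          case (elim h)
          have r: "C (1-(x-h)) (x-h) = C (1-x+h) (x-h)"
            by (simp_all add: algebra_simps)
          have "(m x + e)*h = - (h*cd12 C (1-x) x) + h*cd21 C x (1-x) + e*h"
            by (simp add: m_def algebra_simps)
          then show ?case using elim unfolding V_def r by linarith
        qed
      qed
    qed
  qed
  then have lim2: "((\<lambda>t. 1 + V t / t) \<longlongrightarrow> 1 + (- L)) (at_right 0)" by (assumption | (intro tendsto_intros, auto))
  have ev: "\<forall>\<^sub>F t in at_right 0. qd_ratio C 0 1 t = 1 + V t / t"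
    using eventually_at_right_real[OF d0]
  proof eventually_elim
    case (elim t)
    then have t: "0 < t" "t < d0" by auto
    have pn: "pospart (1 - t) = 1 - t" "negpart (1 + t) = 1" "pospart (0 - t) = 0" "negpart (0 + t) = t"
      using t assms by (auto simp: d0_def intro!: pospart_id negpart_id pospart_0 negpart_1)
    have mem:  "t \<in> {0..1}" "1 - t \<in> {0..1}" using t assms by (auto simp: d0_def)
    show ?case unfolding qd_ratio_def Cvol_def V_def pn using t mem
      by (simp add: cop_bd[OF C] field_simps)
  qed
  have "(qd_ratio C 0 1 \<longlongrightarrow> 1 + (- L)) (at_right 0)" using tendsto_cong[OF ev] lim2 by blast
  then show ?thesis unfolding qdc_is_def by simp
qed

theorem corollary2:
  fixes C :: "real \<Rightarrow> real \<Rightarrow> real"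
  assumes "copula C"
  shows
  "(\<forall>p q L. 0 < p \<and> p < 1 \<and> 0 < q \<and> q < 1 \<and>
      (\<forall>\<^sub>F t in at_right 0. partials_exist C (p+t) (q+t) \<and> partials_exist C (p+t) (q-t) \<and>
                            partials_exist C (p-t) (q+t) \<and> partials_exist C (p-t) (q-t)) \<and>
      ((\<lambda>t. cd21 C (q+t) (p+t) - cd21 C (q-t) (p+t) + cd21 C (q+t) (p-t) - cd21 C (q-t) (p-t)
           + cd12 C (p+t) (q+t) - cd12 C (p-t) (q+t) + cd12 C (p+t) (q-t) - cd12 C (p-t) (q-t))
         \<longlongrightarrow> L) (at_right 0)
      \<longrightarrow> qdc_is C q p (L / 2))
 \<and> (\<forall>p L. 0 < p \<and> p < 1 \<and>
      (\<forall>\<^sub>F t in at_right 0. partials_exist C (p+t) t \<and> partials_exist C (p-t) t) \<and>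
      ((\<lambda>t. cd21 C t (p+t) + cd21 C t (p-t) + cd12 C (p+t) t - cd12 C (p-t) t) \<longlongrightarrow> L) (at_right 0)
      \<longrightarrow> qdc_is C 0 p (L / 2))
 \<and> (\<forall>p L. 0 < p \<and> p < 1 \<and>
      (\<forall>\<^sub>F t in at_right 0. partials_exist C (p+t) (1-t) \<and> partials_exist C (p-t) (1-t)) \<and>
      ((\<lambda>t. cd21 C (1-t) (p+t) + cd21 C (1-t) (p-t) - cd12 C (p+t) (1-t) + cd12 C (p-t) (1-t))
         \<longlongrightarrow> L) (at_right 0)
      \<longrightarrow> qdc_is C 1 p (1 - L / 2))
 \<and> (\<forall>q L. 0 < q \<and> q < 1 \<and>
      (\<forall>\<^sub>F t in at_right 0. partials_exist C t (q+t) \<and> partials_exist C t (q-t)) \<and>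
      ((\<lambda>t. cd21 C (q+t) t - cd21 C (q-t) t + cd12 C t (q+t) + cd12 C t (q-t)) \<longlongrightarrow> L) (at_right 0)
      \<longrightarrow> qdc_is C q 0 L)
 \<and> (\<forall>q L. 0 < q \<and> q < 1 \<and>
      (\<forall>\<^sub>F t in at_right 0. partials_exist C (1-t) (q+t) \<and> partials_exist C (1-t) (q-t)) \<and>
      ((\<lambda>t. cd12 C (1-t) (q+t) + cd12 C (1-t) (q-t) - cd21 C (q+t) (1-t) + cd21 C (q-t) (1-t))
         \<longlongrightarrow> L) (at_right 0)
      \<longrightarrow> qdc_is C q 1 (2 - L))
 \<and> (\<forall>L. (\<forall>\<^sub>F t in at_right 0. partials_exist C t (1-t)) \<and>
      ((\<lambda>t. cd21 C (1-t) t - cd12 C t (1-t)) \<longlongrightarrow> L) (at_right 0)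
      \<longrightarrow> qdc_is C 1 0 (1 - L))
 \<and> (\<forall>L. (\<forall>\<^sub>F t in at_right 0. partials_exist C (1-t) t) \<and>
      ((\<lambda>t. cd12 C (1-t) t - cd21 C t (1-t)) \<longlongrightarrow> L) (at_right 0)
      \<longrightarrow> qdc_is C 0 1 (1 - L))"
    apply (intro conjI allI impI)
  subgoal using case1[OF assms] by blast
  subgoal using case2[OF assms] by blast
  subgoal using case3[OF assms] by blast
  subgoal using case4[OF assms] by blast
  subgoal using case5[OF assms] by blast
  subgoal using case6[OF assms] by blast
  subgoal using case7[OF assms] by blast
  done

end
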